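(* Let $\mathcal{H}$ be a complex linear space equipped with an indefinite inner product $[\cdot,\cdot]$, and let $\mathcal{F}_{++}=\{f\in\mathcal{H} : [f,f]>0\}$. Then every $f\in\mathcal{H}$ can be written as $f=g_1+g_2$ with $g_1,g_2\in\mathcal{F}_{++}$, i.e. $\mathcal{H}=\mathcal{F}_{++}+\mathcal{F}_{++}$. Moreover, every linear operator $W$ defined on $\mathcal{F}_{++}$ can be uniquely extended to a linear operator acting on the whole space $\mathcal{H}$.
   Context: An indefinite inner product on a complex linear space $\mathcal{H}$ is a Hermitian sesquilinear form $[\cdot,\cdot]:\mathcal{H}\times\mathcal{H}\to\mathbb{C}$ (linear in the second argument, $[f,g]=\overline{[g,f]}$) such that there exist $f$ with $[f,f]>0$ and $g$ with $[g,g]<0$. Throughout, $\mathcal{H}$ is assumed non-degenerate: $[f,g]=0$ for all $g\in\mathcal{H}$ implies $f=0$. An operator $W:\mathcal{F}_{++}\to\mathcal{H}$ is called linear (on $\mathcal{F}_{++}$) if $W(cf)=cWf$ for all $f\in\mathcal{F}_{++}$ and nonzero $c\in\mathbb{C}$, and $W(f+g)=Wf+Wg$ whenever $f,g\in\mathcal{F}_{++}$ and $f+g\in\mathcal{F}_{++}$. *)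

theory Defs
  imports "HOL-Analysis.Analysis"
begin

text \<open>A complex linear space is modelled as a type 'a (abelian group) together with a
  scalar multiplication sc :: complex => 'a => 'a satisfying the vector space axioms
  (locale vector_space from HOL.Vector_Spaces).\<close>

definition hermitian_sesq :: "(complex \<Rightarrow> 'a::ab_group_add \<Rightarrow> 'a) \<Rightarrow> ('a \<Rightarrow> 'a \<Rightarrow> complex) \<Rightarrow> bool" where
  "hermitian_sesq sc ip \<longleftrightarrow>
     (\<forall>f g h. ip f (g + h) = ip f g + ip f h) \<and>
     (\<forall>f g c. ip f (sc c g) = c * ip f g) \<and>
     (\<forall>f g. ip f g = cnj (ip g f))"

definition indefinite_ip :: "(complex \<Rightarrow> 'a::ab_group_add \<Rightarrow> 'a) \<Rightarrow> ('a \<Rightarrow> 'a \<Rightarrow> complex) \<Rightarrow> bool" where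
  "indefinite_ip sc ip \<longleftrightarrow> hermitian_sesq sc ip \<and>
     (\<exists>f. 0 < Re (ip f f)) \<and> (\<exists>g. Re (ip g g) < 0)"

definition nondegenerate :: "('a::ab_group_add \<Rightarrow> 'a \<Rightarrow> complex) \<Rightarrow> bool" where
  "nondegenerate ip \<longleftrightarrow> (\<forall>f. (\<forall>g. ip f g = 0) \<longrightarrow> f = 0)"

text \<open>The positive cone F_{++}; for a Hermitian form ip f f is real, so [f,f] > 0 means Re (ip f f) > 0.\<close>
definition Fpp :: "('a \<Rightarrow> 'a \<Rightarrow> complex) \<Rightarrow> 'a set" where
  "Fpp ip = {f. 0 < Re (ip f f)}"

definition linear_on_Fpp ::
  "(complex \<Rightarrow> 'a::ab_group_add \<Rightarrow> 'a) \<Rightarrow> ('a \<Rightarrow> 'a \<Rightarrow> complex) \<Rightarrow> ('a \<Rightarrow> 'a) \<Rightarrow> bool" where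
  "linear_on_Fpp sc ip W \<longleftrightarrow>
     (\<forall>f\<in>Fpp ip. \<forall>c. c \<noteq> 0 \<longrightarrow> W (sc c f) = sc c (W f)) \<and>
     (\<forall>f\<in>Fpp ip. \<forall>g\<in>Fpp ip. f + g \<in> Fpp ip \<longrightarrow> W (f + g) = W f + W g)"

end

theory Submission
  imports Defs
begin

locale hctx = vector_space sc for sc :: "complex \<Rightarrow> 'a::ab_group_add \<Rightarrow> 'a" +
  fixes ip :: "'a \<Rightarrow> 'a \<Rightarrow> complex"
  assumes herm: "hermitian_sesq sc ip"
begin

lemma ip_add_r: "ip f (g + h) = ip f g + ip f h"
  using herm unfolding hermitian_sesq_def by blast
lemma ip_sc_r: "ip f (sc c g) = c * ip f g"
  using herm unfolding hermitian_sesq_def by blast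
lemma ip_cnj: "ip f g = cnj (ip g f)"
  using herm unfolding hermitian_sesq_def by blast
lemma ip_add_l: "ip (f + g) h = ip f h + ip g h"
  by (metis ip_cnj ip_add_r complex_cnj_add)
lemma ip_sc_l: "ip (sc c f) g = cnj c * ip f g"
  by (metis ip_cnj ip_sc_r complex_cnj_mult)

lemma Fpp_sc: assumes "f \<in> Fpp ip" "c \<noteq> 0" shows "sc c f \<in> Fpp ip"
proof -
  have "ip (sc c f) (sc c f) = (c * cnj c) * ip f f"
    by (simp add: ip_sc_l ip_sc_r mult.assoc mult.left_commute)
  also have "c * cnj c = complex_of_real ((cmod c)^2)"
    by (metis complex_norm_square of_real_power)
  finally have "Re (ip (sc c f) (sc c f)) = (cmod c)^2 * Re (ip f f)"
    by simp
  moreover have "(cmod c)^2 > 0" using assms(2) by simp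
  ultimately show ?thesis using assms(1) by (simp add: Fpp_def)
qed

lemma Re_expand:
  "Re (ip (x + sc (of_real t) p) (x + sc (of_real t) p)) =
     Re (ip x x) + 2 * t * Re (ip x p) + t^2 * Re (ip p p)"
proof -
  have "ip (x + sc (of_real t) p) (x + sc (of_real t) p) =
     ip x x + of_real t * ip x p + of_real t * ip p x + of_real t * of_real t * ip p p"
    by (simp add: ip_add_l ip_add_r ip_sc_l ip_sc_r algebra_simps)
  moreover have "Re (ip p x) = Re (ip x p)" by (subst ip_cnj) simp
  ultimately show ?thesis by (simp add: power2_eq_square)
qed

lemma ev_Fpp: assumes "p \<in> Fpp ip"
  shows "\<forall>\<^sub>F t in at_top. x + sc (of_real t) p \<in> Fpp ip"
proof -
  define A where "A = Re (ip x x)"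
  define B where "B = Re (ip x p)"
  define C where "C = Re (ip p p)"
  have C: "C > 0" using assms by (simp add: C_def Fpp_def)
  define N where "N = max 1 ((\<bar>A\<bar> + 2*\<bar>B\<bar> + 1) / C)"
  have "\<forall>t\<ge>N. A + 2 * t * B + t^2 * C > 0"
  proof (intro allI impI)
    fix t assume tN: "t \<ge> N"
    have t1: "t \<ge> 1" using tN by (simp add: N_def)
    have "(\<bar>A\<bar> + 2*\<bar>B\<bar> + 1) / C \<le> t" using tN by (simp add: N_def)
    hence tc: "\<bar>A\<bar> + 2*\<bar>B\<bar> + 1 \<le> t * C" using C by (simp add: pos_divide_le_eq)
    have "t * (\<bar>A\<bar> + 2*\<bar>B\<bar> + 1) \<le> t * (t * C)"
      using tc t1 by (intro mult_left_mono) auto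
    moreover have "1 * \<bar>A\<bar> \<le> t * \<bar>A\<bar>" using t1
      by (intro mult_right_mono) auto
    moreover have "- (t * B) \<le> \<bar>t * B\<bar>" by simp
    moreover have "\<bar>t * B\<bar> = t * \<bar>B\<bar>" using t1 by (simp add: abs_mult)
    moreover have "A \<ge> - \<bar>A\<bar>" by simp
    moreover have "t^2 * C = t * (t * C)" by (simp add: power2_eq_square)
    moreover have "t * (\<bar>A\<bar> + 2*\<bar>B\<bar> + 1) = t * \<bar>A\<bar> + 2 * (t * \<bar>B\<bar>) + t"
      by (simp add: algebra_simps)
    moreover have "2 * t * B = 2 * (t * B)" by simp
    ultimately show "A + 2 * t * B + t^2 * C > 0" using t1
      by linarith
  qed
  hence "\<forall>t\<ge>N. x + sc (of_real t) p \<in> Fpp ip"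
    unfolding Fpp_def mem_Collect_eq Re_expand A_def B_def C_def .
  thus ?thesis unfolding eventually_at_top_linorder by blast
qed

lemma decomp: assumes "p \<in> Fpp ip"
  shows "\<exists>g1 g2. g1 \<in> Fpp ip \<and> g2 \<in> Fpp ip \<and> f = g1 + g2"
proof -
  have "\<forall>\<^sub>F t in at_top. f + sc (of_real t) p \<in> Fpp ip \<and> (t::real) > 0"
    using ev_Fpp[OF assms] eventually_gt_at_top[of 0] by (rule eventually_conj)
  then obtain N where N: "\<forall>t\<ge>N. f + sc (of_real t) p \<in> Fpp ip \<and> (t::real) > 0"
    unfolding eventually_at_top_linorder by blast
  hence h1: "f + sc (of_real N) p \<in> Fpp ip" and h2: "N > 0" by auto
  have h3: "sc (- of_real N) p \<in> Fpp ip" using Fpp_sc[OF assms, of "- of_real N"] h2 by simp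
  have "f = (f + sc (of_real N) p) + sc (- of_real N) p" by simp
  thus ?thesis using h1 h3 by blast
qed

end

locale wctx = hctx sc ip for sc :: "complex \<Rightarrow> 'a::ab_group_add \<Rightarrow> 'a" and ip +
  fixes W :: "'a \<Rightarrow> 'a" and p :: 'a
  assumes lin: "linear_on_Fpp sc ip W" and pF: "p \<in> Fpp ip"
begin

lemma W_sc: "f \<in> Fpp ip \<Longrightarrow> c \<noteq> 0 \<Longrightarrow> W (sc c f) = sc c (W f)"
  using lin unfolding linear_on_Fpp_def by blast
lemma W_add: "f \<in> Fpp ip \<Longrightarrow> g \<in> Fpp ip \<Longrightarrow> f + g \<in> Fpp ip \<Longrightarrow> W (f + g) = W f + W g"
  using lin unfolding linear_on_Fpp_def by blast

lemma W_tp: "(t::real) > 0 \<Longrightarrow> W (sc (of_real t) p) = sc (of_real t) (W p)"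
  by (rule W_sc[OF pF]) simp

lemma Lem: assumes a: "a \<in> Fpp ip" and b: "b \<in> Fpp ip"
  shows "\<forall>\<^sub>F t in at_top. W a + W b = W (a + b + sc (of_real t) p) - sc (of_real t) (W p)"
proof -
  have "\<forall>\<^sub>F t in at_top. (t::real) > 0 \<and> b + sc (of_real t) p \<in> Fpp ip \<and> (a + b) + sc (of_real t) p \<in> Fpp ip"
    using eventually_gt_at_top[of 0] ev_Fpp[OF pF, of b] ev_Fpp[OF pF, of "a+b"]
    by (auto intro: eventually_conj)
  thus ?thesis
  proof (rule eventually_mono)
    fix t :: real
    assume h: "t > 0 \<and> b + sc (of_real t) p \<in> Fpp ip \<and> (a + b) + sc (of_real t) p \<in> Fpp ip"
    have tp: "sc (of_real t) p \<in> Fpp ip" using Fpp_sc[OF pF] h by simp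
    have e1: "W (b + sc (of_real t) p) = W b + sc (of_real t) (W p)"
      using W_add[OF b tp] h W_tp by simp
    have h2: "a + (b + sc (of_real t) p) \<in> Fpp ip" using h by (simp add: add.assoc)
    have "W (a + (b + sc (of_real t) p)) = W a + W (b + sc (of_real t) p)"
      using W_add[OF a _ h2] h by blast
    hence "W (a + b + sc (of_real t) p) = W a + W (b + sc (of_real t) p)"
      by (simp add: add.assoc)
    thus "W a + W b = W (a + b + sc (of_real t) p) - sc (of_real t) (W p)"
      using e1 by simp
  qed
qed

lemma WD: assumes "a \<in> Fpp ip" "b \<in> Fpp ip" "a' \<in> Fpp ip" "b' \<in> Fpp ip" "a + b = a' + b'"
  shows "W a + W b = W a' + W b'"
proof -
  have "\<forall>\<^sub>F t in at_top. W a + W b = W (a + b + sc (of_real t) p) - sc (of_real t) (W p)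
     \<and> W a' + W b' = W (a' + b' + sc (of_real t) p) - sc (of_real t) (W p)"
    using Lem[OF assms(1,2)] Lem[OF assms(3,4)] by (rule eventually_conj)
  then obtain N where "\<forall>t\<ge>N. W a + W b = W (a + b + sc (of_real t) p) - sc (of_real t) (W p)
     \<and> W a' + W b' = W (a' + b' + sc (of_real t) p) - sc (of_real t) (W p)"
    unfolding eventually_at_top_linorder by blast
  thus ?thesis using assms(5) by auto
qed

definition V :: "'a \<Rightarrow> 'a" where
  "V f = (let g = (SOME g. fst g \<in> Fpp ip \<and> snd g \<in> Fpp ip \<and> f = fst g + snd g) in W (fst g) + W (snd g))"

lemma V_eq: assumes "a \<in> Fpp ip" "b \<in> Fpp ip" shows "V (a + b) = W a + W b"
proof -
  define g where "g = (SOME g. fst g \<in> Fpp ip \<and> snd g \<in> Fpp ip \<and> a + b = fst g + snd g)"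
  have "fst (a, b) \<in> Fpp ip \<and> snd (a, b) \<in> Fpp ip \<and> a + b = fst (a, b) + snd (a, b)"
    using assms by simp
  hence g: "fst g \<in> Fpp ip \<and> snd g \<in> Fpp ip \<and> a + b = fst g + snd g"
    unfolding g_def by (rule someI)
  have "V (a + b) = W (fst g) + W (snd g)" unfolding V_def Let_def g_def ..
  also have "\<dots> = W a + W b" using WD[of "fst g" "snd g" a b] g assms by simp
  finally show ?thesis .
qed

lemma V_K: "\<forall>\<^sub>F t in at_top. V f = W (f + sc (of_real t) p) - sc (of_real t) (W p)"
proof -
  obtain a b where ab: "a \<in> Fpp ip" "b \<in> Fpp ip" "f = a + b" using decomp[OF pF] by blast
  show ?thesis using Lem[OF ab(1,2)] V_eq[OF ab(1,2)] ab(3) by simp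
qed

lemma V_ext: assumes f: "f \<in> Fpp ip" shows "V f = W f"
proof -
  have "\<forall>\<^sub>F t in at_top. V f = W (f + sc (of_real t) p) - sc (of_real t) (W p)
       \<and> f + sc (of_real t) p \<in> Fpp ip \<and> (t::real) > 0"
    by (rule eventually_conj[OF V_K eventually_conj[OF ev_Fpp[OF pF] eventually_gt_at_top]])
  then obtain N where N: "\<forall>t\<ge>N. V f = W (f + sc (of_real t) p) - sc (of_real t) (W p)
       \<and> f + sc (of_real t) p \<in> Fpp ip \<and> (t::real) > 0"
    unfolding eventually_at_top_linorder by blast
  hence h: "V f = W (f + sc (of_real N) p) - sc (of_real N) (W p)"
      "f + sc (of_real N) p \<in> Fpp ip" "N > 0" by auto
  have tp: "sc (of_real N) p \<in> Fpp ip" using Fpp_sc[OF pF] h by simp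
  show ?thesis using h W_add[OF f tp] W_tp by simp
qed

lemma ev_double: assumes "\<forall>\<^sub>F t in at_top. P t" shows "\<forall>\<^sub>F t in at_top. P (2 * (t::real))"
proof -
  obtain N where N: "\<forall>t\<ge>N. P t" using assms eventually_at_top_linorder by blast
  have "\<forall>t\<ge>\<bar>N\<bar>. P (2 * t)" using N by auto
  thus ?thesis unfolding eventually_at_top_linorder by blast
qed

lemma V_add: "V (f + g) = V f + V g"
proof -
  have "\<forall>\<^sub>F t in at_top. (V f = W (f + sc (of_real t) p) - sc (of_real t) (W p)
     \<and> V g = W (g + sc (of_real t) p) - sc (of_real t) (W p))
     \<and> (f + sc (of_real t) p \<in> Fpp ip \<and> g + sc (of_real t) p \<in> Fpp ip)
     \<and> (V (f + g) = W (f + g + sc (of_real (2*t)) p) - sc (of_real (2*t)) (W p)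
        \<and> f + g + sc (of_real (2*t)) p \<in> Fpp ip)"
    by (rule eventually_conj[OF eventually_conj[OF V_K V_K]
          eventually_conj[OF eventually_conj[OF ev_Fpp[OF pF] ev_Fpp[OF pF]]
            ev_double[OF eventually_conj[OF V_K ev_Fpp[OF pF]]]]])
  then obtain N where N: "\<forall>t\<ge>N. (V f = W (f + sc (of_real t) p) - sc (of_real t) (W p)
     \<and> V g = W (g + sc (of_real t) p) - sc (of_real t) (W p))
     \<and> (f + sc (of_real t) p \<in> Fpp ip \<and> g + sc (of_real t) p \<in> Fpp ip)
     \<and> (V (f + g) = W (f + g + sc (of_real (2*t)) p) - sc (of_real (2*t)) (W p)
        \<and> f + g + sc (of_real (2*t)) p \<in> Fpp ip)"
    unfolding eventually_at_top_linorder by blast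
  define t where "t = N"
  have h: "V f = W (f + sc (of_real t) p) - sc (of_real t) (W p)"
     "V g = W (g + sc (of_real t) p) - sc (of_real t) (W p)"
     "f + sc (of_real t) p \<in> Fpp ip" "g + sc (of_real t) p \<in> Fpp ip"
     "V (f + g) = W (f + g + sc (of_real (2*t)) p) - sc (of_real (2*t)) (W p)"
     "f + g + sc (of_real (2*t)) p \<in> Fpp ip" using N t_def by auto
  have s2: "\<And>y. sc (of_real (2*t)) y = sc (of_real t) y + sc (of_real t) y"
  proof -
    fix y
    have "(of_real (2*t) :: complex) = of_real t + of_real t" by simp
    thus "sc (of_real (2*t)) y = sc (of_real t) y + sc (of_real t) y"
      by (simp only: scale_left_distrib)
  qed
  have eq: "f + g + sc (of_real (2*t)) p = (f + sc (of_real t) p) + (g + sc (of_real t) p)"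
    by (simp only: s2) (simp add: algebra_simps)
  have w: "W (f + g + sc (of_real (2*t)) p) = W (f + sc (of_real t) p) + W (g + sc (of_real t) p)"
  proof -
    have h6: "(f + sc (of_real t) p) + (g + sc (of_real t) p) \<in> Fpp ip"
      using h(6) by (subst (asm) eq)
    have "W ((f + sc (of_real t) p) + (g + sc (of_real t) p)) = W (f + sc (of_real t) p) + W (g + sc (of_real t) p)"
      by (rule W_add[OF h(3,4) h6])
    thus ?thesis by (subst eq)
  qed
  have "V (f + g) = (W (f + sc (of_real t) p) + W (g + sc (of_real t) p)) - sc (of_real (2*t)) (W p)"
    by (subst h(5), subst w, rule refl)
  also have "\<dots> = (W (f + sc (of_real t) p) + W (g + sc (of_real t) p)) - (sc (of_real t) (W p) + sc (of_real t) (W p))"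
    by (subst s2, rule refl)
  also have "\<dots> = V f + V g" unfolding h(1) h(2) by (simp add: algebra_simps)
  finally show ?thesis .
qed

lemma V_zero: "V 0 = 0"
proof -
  have "\<forall>\<^sub>F t in at_top. V 0 = W (0 + sc (of_real t) p) - sc (of_real t) (W p) \<and> (t::real) > 0"
    using V_K eventually_gt_at_top[of 0] by (rule eventually_conj)
  then obtain N where "\<forall>t\<ge>N. V 0 = W (0 + sc (of_real t) p) - sc (of_real t) (W p) \<and> (t::real) > 0"
    unfolding eventually_at_top_linorder by blast
  thus ?thesis using W_tp by auto
qed

lemma V_sc: "V (sc c f) = sc c (V f)"
proof (cases "c = 0")
  case True thus ?thesis using V_zero by simp
next
  case False
  obtain a b where ab: "a \<in> Fpp ip" "b \<in> Fpp ip" "f = a + b" using decomp[OF pF] by blast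
  have ca: "sc c a \<in> Fpp ip" by (rule Fpp_sc[OF ab(1) False])
  have cb: "sc c b \<in> Fpp ip" by (rule Fpp_sc[OF ab(2) False])
  have sce: "sc c f = sc c a + sc c b" unfolding ab(3) by (rule scale_right_distrib)
  have "V (sc c f) = W (sc c a) + W (sc c b)" unfolding sce by (rule V_eq[OF ca cb])
  also have "\<dots> = sc c (W a) + sc c (W b)"
    unfolding W_sc[OF ab(1) False] W_sc[OF ab(2) False] ..
  also have "\<dots> = sc c (W a + W b)" by (rule scale_right_distrib[symmetric])
  also have "\<dots> = sc c (V f)" unfolding ab(3) V_eq[OF ab(1,2)] ..
  finally show ?thesis .
qed

lemma V_linear: "Vector_Spaces.linear sc sc V"
  unfolding Vector_Spaces.linear_iff using V_add V_sc vector_space_axioms by blast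

lemma V_unique: assumes "Vector_Spaces.linear sc sc U" "\<forall>f\<in>Fpp ip. U f = W f"
  shows "U = V"
proof
  fix f
  obtain a b where ab: "a \<in> Fpp ip" "b \<in> Fpp ip" "f = a + b" using decomp[OF pF] by blast
  have "U f = U a + U b" using assms(1) ab(3) unfolding Vector_Spaces.linear_iff by blast
  thus "U f = V f" using assms(2) ab(1,2) V_eq[OF ab(1,2)] ab(3) by simp
qed

end

theorem lemma2p2:
  fixes sc :: "complex \<Rightarrow> 'a::ab_group_add \<Rightarrow> 'a"
    and ip :: "'a \<Rightarrow> 'a \<Rightarrow> complex"
  assumes "vector_space sc"
    and "indefinite_ip sc ip"
    and "nondegenerate ip"
  shows "(\<forall>f. \<exists>g1 g2. g1 \<in> Fpp ip \<and> g2 \<in> Fpp ip \<and> f = g1 + g2) \<and>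
         (\<forall>W. linear_on_Fpp sc ip W \<longrightarrow>
            (\<exists>!V. Vector_Spaces.linear sc sc V \<and> (\<forall>f\<in>Fpp ip. V f = W f)))"
proof -
  have herm: "hermitian_sesq sc ip" using assms(2) by (simp add: indefinite_ip_def)
  interpret hctx sc ip using assms(1) herm by (simp add: hctx_def hctx_axioms_def)
  obtain p where pF: "p \<in> Fpp ip" using assms(2) by (auto simp: indefinite_ip_def Fpp_def)
  show ?thesis
  proof (intro conjI allI impI)
    fix f show "\<exists>g1 g2. g1 \<in> Fpp ip \<and> g2 \<in> Fpp ip \<and> f = g1 + g2" by (rule decomp[OF pF])
  next
    fix W assume lin: "linear_on_Fpp sc ip W"
    interpret w: wctx sc ip W p
      using lin pF by (unfold_locales) auto
    show "\<exists>!V. Vector_Spaces.linear sc sc V \<and> (\<forall>f\<in>Fpp ip. V f = W f)"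
    proof (rule ex1I[of _ w.V])
      show "Vector_Spaces.linear sc sc w.V \<and> (\<forall>f\<in>Fpp ip. w.V f = W f)"
        using w.V_linear w.V_ext by blast
    next
      fix U assume "Vector_Spaces.linear sc sc U \<and> (\<forall>f\<in>Fpp ip. U f = W f)"
      thus "U = w.V" using w.V_unique by blast
    qed
  qed
qed

end
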